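(* Let $A,B$ be commutative rings, $f:A\to B$ a ring homomorphism and $J$ an ideal of $B$ with $J\subseteq\operatorname{Nil}(B)$. Let $\mathfrak a$ be an ideal of $A$ and $\mathfrak p$ a prime ideal of $A$. Then (1) $\mathfrak p$ is a minimal prime over $\mathfrak a$ if and only if $\mathfrak p^{\prime_f}$ is a minimal prime over $\mathfrak a^e$; (2) $\operatorname{ht}\mathfrak a=\operatorname{ht}\mathfrak a^e$; (3) the only minimal prime ideal of $A\bowtie^fJ$ over $\mathfrak p^e$ is $\mathfrak p^{\prime_f}$; in particular $\operatorname{ht}\mathfrak p^e=\operatorname{ht}\mathfrak p^{\prime_f}$.
   Context: $\operatorname{Nil}(B)$ is the nilradical of $B$. $A\bowtie^fJ=\{(a,f(a)+j): a\in A,\ j\in J\}\subseteq A\times B$; $\iota_A(x)=(x,f(x))$ and $\mathfrak a^e=\iota_A(\mathfrak a)(A\bowtie^fJ)$. For a prime $\mathfrak p$ of $A$, $\mathfrak p^{\prime_f}=\{(p,f(p)+j): p\in\mathfrak p,\ j\in J\}$. Height of an ideal $I$ of a ring $R$: $\operatorname{ht}I=\inf\{\dim R_\mathfrak P:\mathfrak P\supseteq I$ prime$\}$. *)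

theory Defs
  imports "HOL-Algebra.Algebra" "HOL-Library.Extended_Nat"
begin

definition nilradical :: "('b, 'm) ring_scheme \<Rightarrow> 'b set" where
  "nilradical B = {b \<in> carrier B. \<exists>n::nat. b [^]\<^bsub>B\<^esub> n = \<zero>\<^bsub>B\<^esub>}"

definition amalg ::
  "('a, 'm) ring_scheme \<Rightarrow> ('b, 'n) ring_scheme \<Rightarrow> ('a \<Rightarrow> 'b) \<Rightarrow> 'b set \<Rightarrow> ('a \<times> 'b) ring" where
  "amalg A B f J = (RDirProd A B)
     \<lparr>carrier := {(a, f a \<oplus>\<^bsub>B\<^esub> j) | a j. a \<in> carrier A \<and> j \<in> J}\<rparr>"

definition iotaA :: "('a \<Rightarrow> 'b) \<Rightarrow> 'a \<Rightarrow> 'a \<times> 'b" where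
  "iotaA f x = (x, f x)"

definition ext_ideal ::
  "('a, 'm) ring_scheme \<Rightarrow> ('b, 'n) ring_scheme \<Rightarrow> ('a \<Rightarrow> 'b) \<Rightarrow> 'b set \<Rightarrow> 'a set \<Rightarrow> ('a \<times> 'b) set" where
  "ext_ideal A B f J I = genideal (amalg A B f J) (iotaA f ` I)"

definition prime_f ::
  "('b, 'n) ring_scheme \<Rightarrow> ('a \<Rightarrow> 'b) \<Rightarrow> 'b set \<Rightarrow> 'a set \<Rightarrow> ('a \<times> 'b) set" where
  "prime_f B f J P = {(p, f p \<oplus>\<^bsub>B\<^esub> j) | p j. p \<in> P \<and> j \<in> J}"

definition minimal_prime_over :: "('a, 'm) ring_scheme \<Rightarrow> 'a set \<Rightarrow> 'a set \<Rightarrow> bool" where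
  "minimal_prime_over R I P \<longleftrightarrow> primeideal P R \<and> I \<subseteq> P \<and>
     (\<forall>Q. primeideal Q R \<and> I \<subseteq> Q \<and> Q \<subseteq> P \<longrightarrow> Q = P)"

text \<open>Krull dimension of the localization R_P, for a prime P: the supremum of the lengths n of
  strictly increasing chains of prime ideals P_0 < P_1 < ... < P_n of R contained in P
  (these correspond bijectively to chains of primes of R_P).\<close>
definition dim_loc :: "('a, 'm) ring_scheme \<Rightarrow> 'a set \<Rightarrow> enat" where
  "dim_loc R P = Sup {enat n | n. \<exists>C :: nat \<Rightarrow> 'a set.
       (\<forall>i\<le>n. primeideal (C i) R \<and> C i \<subseteq> P) \<and> (\<forall>i<n. C i \<subset> C (Suc i))}"

text \<open>Height of an ideal: ht I = inf { dim R_P : P prime, P contains I } (infinity if no such P).\<close>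
definition height :: "('a, 'm) ring_scheme \<Rightarrow> 'a set \<Rightarrow> enat" where
  "height R I = Inf {dim_loc R P | P. primeideal P R \<and> I \<subseteq> P}"

end

theory Submission
  imports Defs
begin


lemma amalg_carrier: "carrier (amalg A B f J) = {(a, f a \<oplus>\<^bsub>B\<^esub> j) | a j. a \<in> carrier A \<and> j \<in> J}"
  by (simp add: amalg_def)
lemma amalg_mult [simp]: "(a,b) \<otimes>\<^bsub>amalg A B f J\<^esub> (c,d) = (a \<otimes>\<^bsub>A\<^esub> c, b \<otimes>\<^bsub>B\<^esub> d)"
  by (simp add: amalg_def RDirProd_def DirProd_def monoid.defs)
lemma amalg_add [simp]: "(a,b) \<oplus>\<^bsub>amalg A B f J\<^esub> (c,d) = (a \<oplus>\<^bsub>A\<^esub> c, b \<oplus>\<^bsub>B\<^esub> d)"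
  by (simp add: amalg_def RDirProd_def DirProd_def monoid.defs)
lemma amalg_one [simp]: "\<one>\<^bsub>amalg A B f J\<^esub> = (\<one>\<^bsub>A\<^esub>, \<one>\<^bsub>B\<^esub>)"
  by (simp add: amalg_def RDirProd_def DirProd_def monoid.defs)
lemma amalg_zero [simp]: "\<zero>\<^bsub>amalg A B f J\<^esub> = (\<zero>\<^bsub>A\<^esub>, \<zero>\<^bsub>B\<^esub>)"
  by (simp add: amalg_def RDirProd_def DirProd_def monoid.defs)
lemma amalg_pow: "(a,b) [^]\<^bsub>amalg A B f J\<^esub> (n::nat) = (a [^]\<^bsub>A\<^esub> n, b [^]\<^bsub>B\<^esub> n)"
  by (induct n) simp_all



lemma RDP_mult [simp]: "(a,b) \<otimes>\<^bsub>RDirProd A B\<^esub> (c,d) = (a \<otimes>\<^bsub>A\<^esub> c, b \<otimes>\<^bsub>B\<^esub> d)"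
  by (simp add: RDirProd_def DirProd_def monoid.defs)
lemma RDP_add [simp]: "(a,b) \<oplus>\<^bsub>RDirProd A B\<^esub> (c,d) = (a \<oplus>\<^bsub>A\<^esub> c, b \<oplus>\<^bsub>B\<^esub> d)"
  by (simp add: RDirProd_def DirProd_def monoid.defs)
lemma RDP_one [simp]: "\<one>\<^bsub>RDirProd A B\<^esub> = (\<one>\<^bsub>A\<^esub>, \<one>\<^bsub>B\<^esub>)"
  by (simp add: RDirProd_def DirProd_def monoid.defs)
lemma RDP_zero [simp]: "\<zero>\<^bsub>RDirProd A B\<^esub> = (\<zero>\<^bsub>A\<^esub>, \<zero>\<^bsub>B\<^esub>)"
  by (simp add: RDirProd_def DirProd_def monoid.defs)

locale amal = A?: cring A + B?: cring B for A :: "('a,'m) ring_scheme" and B :: "('b,'n) ring_scheme" +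
  fixes f J
  assumes hom: "f \<in> ring_hom A B" and idJ: "ideal J B" and nil: "J \<subseteq> nilradical B"
begin

abbreviation "R \<equiv> amalg A B f J"

lemma fcarr: "a \<in> carrier A \<Longrightarrow> f a \<in> carrier B"
  by (rule ring_hom_closed[OF hom])
lemma Jcarr: "j \<in> J \<Longrightarrow> j \<in> carrier B"
  by (rule ideal.Icarr[OF idJ])

lemma RDP_ring: "ring (RDirProd A B)"
  by (rule RDirProd_ring[OF A.ring_axioms B.ring_axioms])

lemma RDP_neg: assumes "a \<in> carrier A" "b \<in> carrier B"
  shows "\<ominus>\<^bsub>RDirProd A B\<^esub> (a,b) = (\<ominus>\<^bsub>A\<^esub> a, \<ominus>\<^bsub>B\<^esub> b)"
proof -
  interpret P: ring "RDirProd A B" by (rule RDP_ring)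
  show ?thesis
    by (rule P.minus_equality) (use assms in \<open>simp_all add: RDirProd_carrier A.l_neg B.l_neg\<close>)
qed

lemma R_cring: "cring R"
proof -
  interpret P: ring "RDirProd A B" by (rule RDP_ring)
  let ?S = "{(a, f a \<oplus>\<^bsub>B\<^esub> j) | a j. a \<in> carrier A \<and> j \<in> J}"
  have sub: "?S \<subseteq> carrier (RDirProd A B)"
    by (auto simp: RDirProd_carrier fcarr Jcarr)
  have "subring ?S (RDirProd A B)"
  proof (rule P.subringI[OF sub])
    show "\<one>\<^bsub>RDirProd A B\<^esub> \<in> ?S"
      using hom idJ by (auto intro!: exI[of _ "\<one>\<^bsub>A\<^esub>"] exI[of _ "\<zero>\<^bsub>B\<^esub>"]
         simp: ring_hom_one additive_subgroup.zero_closed ideal.axioms(1))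
    show "\<ominus>\<^bsub>RDirProd A B\<^esub> h \<in> ?S" if "h \<in> ?S" for h
    proof -
      from that obtain a j where h: "h = (a, f a \<oplus>\<^bsub>B\<^esub> j)" "a \<in> carrier A" "j \<in> J" by blast
      have "\<ominus>\<^bsub>RDirProd A B\<^esub> h = (\<ominus>\<^bsub>A\<^esub> a, \<ominus>\<^bsub>B\<^esub> (f a \<oplus>\<^bsub>B\<^esub> j))"
        using h by (simp add: RDP_neg fcarr Jcarr)
      also have "\<dots> = (\<ominus>\<^bsub>A\<^esub> a, f (\<ominus>\<^bsub>A\<^esub> a) \<oplus>\<^bsub>B\<^esub> \<ominus>\<^bsub>B\<^esub> j)"
        using h hom ring_hom_cring.hom_a_inv[of A B f a] by (simp add: ring_hom_cring_def ring_hom_cring_axioms_def A.cring_axioms B.cring_axioms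
             fcarr Jcarr B.minus_add)
      finally show ?thesis using h idJ
        by (auto simp: additive_subgroup.a_inv_closed ideal.axioms(1))
    qed
    show "h1 \<otimes>\<^bsub>RDirProd A B\<^esub> h2 \<in> ?S" if "h1 \<in> ?S" "h2 \<in> ?S" for h1 h2
    proof -
      from that obtain a j b k where h: "h1 = (a, f a \<oplus>\<^bsub>B\<^esub> j)" "a \<in> carrier A" "j \<in> J"
        "h2 = (b, f b \<oplus>\<^bsub>B\<^esub> k)" "b \<in> carrier A" "k \<in> J" by blast
      have "(f a \<oplus>\<^bsub>B\<^esub> j) \<otimes>\<^bsub>B\<^esub> (f b \<oplus>\<^bsub>B\<^esub> k) =
            f (a \<otimes>\<^bsub>A\<^esub> b) \<oplus>\<^bsub>B\<^esub> ((f a \<otimes>\<^bsub>B\<^esub> k \<oplus>\<^bsub>B\<^esub> j \<otimes>\<^bsub>B\<^esub> f b) \<oplus>\<^bsub>B\<^esub> j \<otimes>\<^bsub>B\<^esub> k)"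
        proof -
        have c: "f a \<in> carrier B" "f b \<in> carrier B" "j \<in> carrier B" "k \<in> carrier B"
          using h by (auto simp: fcarr Jcarr)
        have "(f a \<oplus>\<^bsub>B\<^esub> j) \<otimes>\<^bsub>B\<^esub> (f b \<oplus>\<^bsub>B\<^esub> k) =
          (f a \<otimes>\<^bsub>B\<^esub> f b \<oplus>\<^bsub>B\<^esub> j \<otimes>\<^bsub>B\<^esub> f b) \<oplus>\<^bsub>B\<^esub> (f a \<otimes>\<^bsub>B\<^esub> k \<oplus>\<^bsub>B\<^esub> j \<otimes>\<^bsub>B\<^esub> k)"
          using c by (simp only: B.l_distr B.r_distr B.add.m_closed B.m_closed)
        also have "\<dots> = f a \<otimes>\<^bsub>B\<^esub> f b \<oplus>\<^bsub>B\<^esub> ((f a \<otimes>\<^bsub>B\<^esub> k \<oplus>\<^bsub>B\<^esub> j \<otimes>\<^bsub>B\<^esub> f b) \<oplus>\<^bsub>B\<^esub> j \<otimes>\<^bsub>B\<^esub> k)"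
          using c by (simp add: B.a_ac)
        finally show ?thesis using h hom by (simp add: ring_hom_mult)
      qed
      moreover have "(f a \<otimes>\<^bsub>B\<^esub> k \<oplus>\<^bsub>B\<^esub> j \<otimes>\<^bsub>B\<^esub> f b) \<oplus>\<^bsub>B\<^esub> j \<otimes>\<^bsub>B\<^esub> k \<in> J"
        using h idJ by (meson additive_subgroup.a_closed ideal.axioms(1) ideal.I_l_closed ideal.I_r_closed fcarr Jcarr)
      ultimately show ?thesis using h by (auto intro!: exI[of _ "a \<otimes>\<^bsub>A\<^esub> b"])
    qed
    show "h1 \<oplus>\<^bsub>RDirProd A B\<^esub> h2 \<in> ?S" if "h1 \<in> ?S" "h2 \<in> ?S" for h1 h2
    proof -
      from that obtain a j b k where h: "h1 = (a, f a \<oplus>\<^bsub>B\<^esub> j)" "a \<in> carrier A" "j \<in> J"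
        "h2 = (b, f b \<oplus>\<^bsub>B\<^esub> k)" "b \<in> carrier A" "k \<in> J" by blast
      have "(f a \<oplus>\<^bsub>B\<^esub> j) \<oplus>\<^bsub>B\<^esub> (f b \<oplus>\<^bsub>B\<^esub> k) = f (a \<oplus>\<^bsub>A\<^esub> b) \<oplus>\<^bsub>B\<^esub> (j \<oplus>\<^bsub>B\<^esub> k)"
        using h hom by (simp add: ring_hom_add fcarr Jcarr B.a_ac)
      moreover have "j \<oplus>\<^bsub>B\<^esub> k \<in> J"
        using h idJ by (meson additive_subgroup.a_closed ideal.axioms(1))
      ultimately show ?thesis using h by (auto intro!: exI[of _ "a \<oplus>\<^bsub>A\<^esub> b"])
    qed
  qed
  moreover have "subcring ?S (RDirProd A B)"
    by (rule P.subcringI[OF calculation]) (auto simp: A.m_comm B.m_comm fcarr Jcarr)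
  ultimately show ?thesis
    using P.subcring_iff[OF sub] by (simp add: amalg_def)
qed

lemma R_ring: "ring R" using R_cring cring.axioms(1) by blast

lemma J0: "\<zero>\<^bsub>B\<^esub> \<in> J"
  using idJ by (simp add: additive_subgroup.zero_closed ideal.axioms(1))

lemma Rcarr_iff: "(x, y) \<in> carrier R \<longleftrightarrow> x \<in> carrier A \<and> (\<exists>j\<in>J. y = f x \<oplus>\<^bsub>B\<^esub> j)"
  by (auto simp: amalg_carrier)

lemma iota_carr: "a \<in> carrier A \<Longrightarrow> (a, f a) \<in> carrier R"
  using J0 by (auto simp: Rcarr_iff fcarr intro!: bexI[of _ "\<zero>\<^bsub>B\<^esub>"])

lemma fst_hom: "ring_hom_ring R A fst"
  by (rule ring_hom_ringI[OF R_ring A.ring_axioms]) (auto simp: amalg_carrier)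

lemma iota_hom: "ring_hom_ring A R (iotaA f)"
  by (rule ring_hom_ringI[OF A.ring_axioms R_ring])
     (auto simp: iotaA_def iota_carr hom ring_hom_mult ring_hom_add ring_hom_one)

lemma prime_f_eq: "P \<subseteq> carrier A \<Longrightarrow> prime_f B f J P = {r \<in> carrier R. fst r \<in> P}"
  by (auto simp: prime_f_def amalg_carrier)

lemma Icarr_sub: "ideal I S \<Longrightarrow> I \<subseteq> carrier S"
  by (simp add: additive_subgroup.a_subset ideal.axioms(1))

lemma prime_f_prime: "primeideal P A \<Longrightarrow> primeideal (prime_f B f J P) R"
  using ring_hom_ring.primeideal_vimage[OF fst_hom R_cring, of P]
  by (simp add: prime_f_eq Icarr_sub primeideal.axioms(1))

lemma prime_f_ideal: "ideal P A \<Longrightarrow> ideal (prime_f B f J P) R"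
  using ring_hom_ring.ideal_vimage[OF fst_hom]
  by (simp add: prime_f_eq ideal.Icarr subsetI)

lemma fst_prime_f: "fst ` prime_f B f J P = P"
  using J0 by (force simp: prime_f_def image_iff)

lemma prime_f_mono: "prime_f B f J P \<subseteq> prime_f B f J Q \<longleftrightarrow> P \<subseteq> Q"
proof
  assume "prime_f B f J P \<subseteq> prime_f B f J Q"
  then have "fst ` prime_f B f J P \<subseteq> fst ` prime_f B f J Q" by blast
  then show "P \<subseteq> Q" by (simp add: fst_prime_f)
qed (auto simp: prime_f_def)

lemma prime_f_inj: "prime_f B f J P1 = prime_f B f J P2 \<longleftrightarrow> P1 = P2"
  by (metis fst_prime_f)

lemma prime_pow: assumes "primeideal Q R" "x \<in> carrier R" "x [^]\<^bsub>R\<^esub> (n::nat) \<in> Q"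
  shows "x \<in> Q"
  using assms(3)
proof (induct n)
  case 0
  then have "\<one>\<^bsub>R\<^esub> \<in> Q" by simp
  then have "Q = carrier R" using assms(1) ideal.one_imp_carrier primeideal.axioms(1) by blast
  then show ?case using assms(1) primeideal.I_notcarr by metis
next
  case (Suc n)
  have c: "x [^]\<^bsub>R\<^esub> n \<in> carrier R"
    using monoid.nat_pow_closed[OF ring.axioms(2)[OF R_ring] assms(2)] .
  have m: "x [^]\<^bsub>R\<^esub> n \<otimes>\<^bsub>R\<^esub> x \<in> Q" using Suc(2) by simp
  have "x [^]\<^bsub>R\<^esub> n \<in> Q \<or> x \<in> Q"
    using primeideal.I_prime[OF assms(1) c assms(2) m] .
  then show ?case using Suc(1) by blast
qed

lemma nilJ_in_prime: assumes "primeideal Q R" "j \<in> J" shows "(\<zero>\<^bsub>A\<^esub>, j) \<in> Q"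
proof -
  from assms(2) nil obtain n where n: "j [^]\<^bsub>B\<^esub> (n::nat) = \<zero>\<^bsub>B\<^esub>" by (auto simp: nilradical_def)
  have Q0: "(\<zero>\<^bsub>A\<^esub>, \<zero>\<^bsub>B\<^esub>) \<in> Q"
    using assms(1) by (metis amalg_zero additive_subgroup.zero_closed ideal.axioms(1) primeideal.axioms(1))
  show ?thesis
  proof (cases n)
    case 0
    then have "\<one>\<^bsub>B\<^esub> = \<zero>\<^bsub>B\<^esub>" using n by simp
    then have "j = \<zero>\<^bsub>B\<^esub>" using Jcarr[OF assms(2)] by (metis B.l_one B.l_null)
    then show ?thesis using Q0 by simp
  next
    case (Suc m)
    have c: "(\<zero>\<^bsub>A\<^esub>, j) \<in> carrier R"
      using assms(2) Jcarr by (auto simp: Rcarr_iff fcarr intro!: bexI[of _ j] ring_hom_zero[OF hom A.ring_axioms B.ring_axioms])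
    have "(\<zero>\<^bsub>A\<^esub>, j) [^]\<^bsub>R\<^esub> n = (\<zero>\<^bsub>A\<^esub>, \<zero>\<^bsub>B\<^esub>)"
      using Suc n by (simp add: amalg_pow A.nat_pow_zero)
    then show ?thesis using prime_pow[OF assms(1) c, of n] Q0 by simp
  qed
qed

lemma prime_shift: assumes "primeideal Q R" "x \<in> carrier A" "j \<in> J"
  shows "(x, f x \<oplus>\<^bsub>B\<^esub> j) \<in> Q \<longleftrightarrow> (x, f x) \<in> Q"
proof -
  have addQ: "u \<oplus>\<^bsub>R\<^esub> v \<in> Q" if "u \<in> Q" "v \<in> Q" for u v
    using assms(1) that by (meson additive_subgroup.a_closed ideal.axioms(1) primeideal.axioms(1))
  have nj: "\<ominus>\<^bsub>B\<^esub> j \<in> J" using idJ assms(3) by (simp add: additive_subgroup.a_inv_closed ideal.axioms(1))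
  have c: "f x \<in> carrier B" "j \<in> carrier B" using assms fcarr Jcarr by auto
  show ?thesis
  proof
    assume "(x, f x \<oplus>\<^bsub>B\<^esub> j) \<in> Q"
    from addQ[OF this nilJ_in_prime[OF assms(1) nj]]
    show "(x, f x) \<in> Q" using c assms(2) by (simp add: B.a_assoc B.r_neg)
  next
    assume "(x, f x) \<in> Q"
    from addQ[OF this nilJ_in_prime[OF assms(1) assms(3)]]
    show "(x, f x \<oplus>\<^bsub>B\<^esub> j) \<in> Q" using c assms(2) by simp
  qed
qed

lemma prime_classify: assumes "primeideal Q R"
  shows "primeideal {a \<in> carrier A. iotaA f a \<in> Q} A \<and> Q = prime_f B f J {a \<in> carrier A. iotaA f a \<in> Q}"
proof
  show "primeideal {a \<in> carrier A. iotaA f a \<in> Q} A"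
    using ring_hom_ring.primeideal_vimage[OF iota_hom A.cring_axioms assms] .
  have sub: "Q \<subseteq> carrier R" using assms by (simp add: Icarr_sub primeideal.axioms(1))
  show "Q = prime_f B f J {a \<in> carrier A. iotaA f a \<in> Q}"
  proof
    show "Q \<subseteq> prime_f B f J {a \<in> carrier A. iotaA f a \<in> Q}"
    proof
      fix z assume z: "z \<in> Q"
      with sub obtain x j where "z = (x, f x \<oplus>\<^bsub>B\<^esub> j)" "x \<in> carrier A" "j \<in> J" by (auto simp: amalg_carrier)
      then show "z \<in> prime_f B f J {a \<in> carrier A. iotaA f a \<in> Q}"
        using z prime_shift[OF assms] by (auto simp: prime_f_def iotaA_def)
    qed
  next
    show "prime_f B f J {a \<in> carrier A. iotaA f a \<in> Q} \<subseteq> Q"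
      using prime_shift[OF assms] by (auto simp: prime_f_def iotaA_def)
  qed
qed

lemma prime_R_iff: "primeideal Q R \<longleftrightarrow> (\<exists>P. primeideal P A \<and> Q = prime_f B f J P)"
  using prime_classify prime_f_prime by blast

lemma ext_sub_iff: assumes "ideal I A" "ideal P A"
  shows "ext_ideal A B f J I \<subseteq> prime_f B f J P \<longleftrightarrow> I \<subseteq> P"
proof
  have sub: "iotaA f ` I \<subseteq> carrier R"
    using assms(1) iota_carr by (auto simp: iotaA_def ideal.Icarr)
  assume "ext_ideal A B f J I \<subseteq> prime_f B f J P"
  then have "iotaA f ` I \<subseteq> prime_f B f J P"
    using ring.genideal_self[OF R_ring sub] by (auto simp: ext_ideal_def)
  then have "fst ` iotaA f ` I \<subseteq> fst ` prime_f B f J P" by blast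
  then show "I \<subseteq> P" by (simp add: fst_prime_f image_image iotaA_def)
next
  assume "I \<subseteq> P"
  then have "iotaA f ` I \<subseteq> prime_f B f J P"
    using J0 assms(1) by (force simp: prime_f_def iotaA_def ideal.Icarr fcarr)
  then show "ext_ideal A B f J I \<subseteq> prime_f B f J P"
    unfolding ext_ideal_def by (rule ring.genideal_minimal[OF R_ring prime_f_ideal[OF assms(2)]])
qed

lemma prime_R_fst: "primeideal Q R \<Longrightarrow> primeideal (fst ` Q) A \<and> Q = prime_f B f J (fst ` Q)"
  using prime_R_iff fst_prime_f by metis

lemma prime_ideal: "primeideal P A \<Longrightarrow> ideal P A" by (simp add: primeideal.axioms(1))

lemma part1: assumes "ideal I A" "primeideal P A"
  shows "minimal_prime_over A I P \<longleftrightarrow> minimal_prime_over R (ext_ideal A B f J I) (prime_f B f J P)"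
proof -
  have X: "(\<forall>Q. primeideal Q R \<and> ext_ideal A B f J I \<subseteq> Q \<and> Q \<subseteq> prime_f B f J P \<longrightarrow> Q = prime_f B f J P)
      \<longleftrightarrow> (\<forall>Q. primeideal Q A \<and> I \<subseteq> Q \<and> Q \<subseteq> P \<longrightarrow> Q = P)" (is "?L \<longleftrightarrow> ?R")
  proof
    assume L: ?L
    show ?R
    proof (intro allI impI)
      fix Q assume Q: "primeideal Q A \<and> I \<subseteq> Q \<and> Q \<subseteq> P"
      have p1: "primeideal (prime_f B f J Q) R" using Q prime_f_prime by blast
      have p2: "ext_ideal A B f J I \<subseteq> prime_f B f J Q"
        using Q ext_sub_iff[OF assms(1) prime_ideal[of Q]] by blast
      have p3: "prime_f B f J Q \<subseteq> prime_f B f J P" using Q prime_f_mono[of Q P] by blast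
      have "prime_f B f J Q = prime_f B f J P" using L p1 p2 p3 by blast
      then have "fst ` prime_f B f J Q = fst ` prime_f B f J P" by simp
      then show "Q = P" by (simp only: fst_prime_f)
    qed
  next
    assume R: ?R
    show ?L
    proof (intro allI impI)
      fix Q assume Q: "primeideal Q R \<and> ext_ideal A B f J I \<subseteq> Q \<and> Q \<subseteq> prime_f B f J P"
      then obtain q where q: "primeideal q A" "Q = prime_f B f J q" using prime_R_iff by blast
      have "I \<subseteq> q" using Q q ext_sub_iff[OF assms(1) prime_ideal[OF q(1)]] by simp
      moreover have "q \<subseteq> P" using Q q prime_f_mono[of q P] by simp
      ultimately have "q = P" using R q(1) by blast
      then show "Q = prime_f B f J P" using q(2) by simp
    qed
  qed
  have e: "ext_ideal A B f J I \<subseteq> prime_f B f J P \<longleftrightarrow> I \<subseteq> P"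
    by (rule ext_sub_iff[OF assms(1) prime_ideal[OF assms(2)]])
  have pr: "primeideal (prime_f B f J P) R" by (rule prime_f_prime[OF assms(2)])
  show ?thesis unfolding minimal_prime_over_def e using pr assms(2) X by simp
qed

lemma dim_loc_eq: assumes "primeideal P A"
  shows "dim_loc R (prime_f B f J P) = dim_loc A P"
proof -
  have "{enat n | n. \<exists>C :: nat \<Rightarrow> ('a \<times> 'b) set.
       (\<forall>i\<le>n. primeideal (C i) R \<and> C i \<subseteq> prime_f B f J P) \<and> (\<forall>i<n. C i \<subset> C (Suc i))}
      = {enat n | n. \<exists>C :: nat \<Rightarrow> 'a set.
       (\<forall>i\<le>n. primeideal (C i) A \<and> C i \<subseteq> P) \<and> (\<forall>i<n. C i \<subset> C (Suc i))}" (is "?X = ?Y")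
  proof
    show "?X \<subseteq> ?Y"
    proof
      fix e assume "e \<in> ?X"
      then obtain n C where e: "e = enat n" and C: "\<forall>i\<le>n. primeideal (C i) R \<and> C i \<subseteq> prime_f B f J P"
        "\<forall>i<n. C i \<subset> C (Suc i)" by blast
      define D where "D i = fst ` C i" for i
      have CD: "primeideal (D i) A \<and> C i = prime_f B f J (D i)" if "i \<le> n" for i
      proof -
        have "primeideal (C i) R" using C(1) that by blast
        from prime_R_fst[OF this] show ?thesis unfolding D_def .
      qed
      have D1: "\<forall>i\<le>n. primeideal (D i) A \<and> D i \<subseteq> P"
      proof (intro allI impI conjI)
        fix i assume i: "i \<le> n"
        show "primeideal (D i) A" using CD[OF i] by blast
        have "prime_f B f J (D i) \<subseteq> prime_f B f J P" using CD[OF i] C(1) i by metis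
        then show "D i \<subseteq> P" by (simp only: prime_f_mono)
      qed
      have D2: "\<forall>i<n. D i \<subset> D (Suc i)"
      proof (intro allI impI)
        fix i assume i: "i < n"
        have "prime_f B f J (D i) \<subset> prime_f B f J (D (Suc i))"
        proof -
          have i1: "i \<le> n" "Suc i \<le> n" using i by auto
          have "C i \<subset> C (Suc i)" using C(2) i by blast
          then show ?thesis using CD[OF i1(1)] CD[OF i1(2)] by simp
        qed
        then have a: "D i \<subseteq> D (Suc i)" "prime_f B f J (D i) \<noteq> prime_f B f J (D (Suc i))"
          unfolding psubset_eq prime_f_mono by simp_all
        have "D i \<noteq> D (Suc i)"
        proof
          assume "D i = D (Suc i)"
          then show False using a(2) by simp
        qed
        then show "D i \<subset> D (Suc i)" using a(1) by (simp only: psubset_eq simp_thms)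
      qed
      show "e \<in> ?Y" using e D1 D2 by blast
    qed
  next
    show "?Y \<subseteq> ?X"
    proof
      fix e assume "e \<in> ?Y"
      then obtain n D where e: "e = enat n" and D: "\<forall>i\<le>n. primeideal (D i) A \<and> D i \<subseteq> P"
        "\<forall>i<n. D i \<subset> D (Suc i)" by blast
      define C where "C i = prime_f B f J (D i)" for i
      have C1: "\<forall>i\<le>n. primeideal (C i) R \<and> C i \<subseteq> prime_f B f J P"
      proof (intro allI impI conjI)
        fix i assume i: "i \<le> n"
        show "primeideal (C i) R" unfolding C_def using D(1) i prime_f_prime by blast
        show "C i \<subseteq> prime_f B f J P" unfolding C_def prime_f_mono using D(1) i by blast
      qed
      have C2: "\<forall>i<n. C i \<subset> C (Suc i)"
        unfolding C_def psubset_eq prime_f_mono prime_f_inj using D(2) by (simp only: psubset_eq)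
      show "e \<in> ?X" using e C1 C2 by blast
    qed
  qed
  then show ?thesis unfolding dim_loc_def by simp
qed

lemma part2: assumes "ideal I A"
  shows "height A I = height R (ext_ideal A B f J I)"
proof -
  have "{dim_loc R Q | Q. primeideal Q R \<and> ext_ideal A B f J I \<subseteq> Q}
      = {dim_loc A P | P. primeideal P A \<and> I \<subseteq> P}"
  proof (intro equalityI subsetI)
    fix x assume "x \<in> {dim_loc R Q | Q. primeideal Q R \<and> ext_ideal A B f J I \<subseteq> Q}"
    then obtain Q where Q: "x = dim_loc R Q" "primeideal Q R" "ext_ideal A B f J I \<subseteq> Q" by blast
    from Q(2) obtain P where P: "primeideal P A" "Q = prime_f B f J P" using prime_R_iff by blast
    have "I \<subseteq> P" using Q(3) P ext_sub_iff[OF assms prime_ideal[OF P(1)]] by simp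
    moreover have "x = dim_loc A P" using Q(1) P dim_loc_eq[OF P(1)] by simp
    ultimately show "x \<in> {dim_loc A P | P. primeideal P A \<and> I \<subseteq> P}" using P(1) by blast
  next
    fix x assume "x \<in> {dim_loc A P | P. primeideal P A \<and> I \<subseteq> P}"
    then obtain P where P: "x = dim_loc A P" "primeideal P A" "I \<subseteq> P" by blast
    have "x = dim_loc R (prime_f B f J P)" using P dim_loc_eq[OF P(2)] by simp
    moreover have "primeideal (prime_f B f J P) R" by (rule prime_f_prime[OF P(2)])
    moreover have "ext_ideal A B f J I \<subseteq> prime_f B f J P"
      using P(3) ext_sub_iff[OF assms prime_ideal[OF P(2)]] by simp
    ultimately show "x \<in> {dim_loc R Q | Q. primeideal Q R \<and> ext_ideal A B f J I \<subseteq> Q}" by blast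
  qed
  then show ?thesis unfolding height_def by simp
qed

lemma part3: assumes "primeideal P A"
  shows "{Q. minimal_prime_over R (ext_ideal A B f J P) Q} = {prime_f B f J P}"
    and "height R (ext_ideal A B f J P) = height R (prime_f B f J P)"
proof -
  have key: "ext_ideal A B f J P \<subseteq> Q \<longleftrightarrow> prime_f B f J P \<subseteq> Q" if "primeideal Q R" for Q
  proof -
    from prime_R_iff[THEN iffD1, OF that] obtain q where q: "primeideal q A" "Q = prime_f B f J q" by blast
    have "ext_ideal A B f J P \<subseteq> prime_f B f J q \<longleftrightarrow> P \<subseteq> q"
      by (rule ext_sub_iff[OF prime_ideal[OF assms] prime_ideal[OF q(1)]])
    then show ?thesis using q(2) prime_f_mono[of P q] by simp
  qed
  have pr: "primeideal (prime_f B f J P) R" by (rule prime_f_prime[OF assms])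
  show "{Q. minimal_prime_over R (ext_ideal A B f J P) Q} = {prime_f B f J P}"
  proof (intro equalityI subsetI)
    fix Q assume "Q \<in> {Q. minimal_prime_over R (ext_ideal A B f J P) Q}"
    then have Q: "primeideal Q R" "ext_ideal A B f J P \<subseteq> Q"
      "\<And>Q'. primeideal Q' R \<and> ext_ideal A B f J P \<subseteq> Q' \<and> Q' \<subseteq> Q \<Longrightarrow> Q' = Q"
      unfolding minimal_prime_over_def by auto
    have "prime_f B f J P \<subseteq> Q" using key[OF Q(1)] Q(2) by simp
    moreover have "ext_ideal A B f J P \<subseteq> prime_f B f J P" using key[OF pr] by simp
    ultimately have "prime_f B f J P = Q" using Q(3)[of "prime_f B f J P"] pr by simp
    then show "Q \<in> {prime_f B f J P}" by simp
  next
    fix Q assume "Q \<in> {prime_f B f J P}"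
    then have Q: "Q = prime_f B f J P" by simp
    have "ext_ideal A B f J P \<subseteq> prime_f B f J P" using key[OF pr] by simp
    moreover have "Q' = prime_f B f J P" if "primeideal Q' R" "ext_ideal A B f J P \<subseteq> Q'" "Q' \<subseteq> prime_f B f J P" for Q'
      using key[OF that(1)] that(2,3) by simp
    ultimately have "minimal_prime_over R (ext_ideal A B f J P) (prime_f B f J P)"
      unfolding minimal_prime_over_def using pr by (intro conjI allI impI) (simp_all only: simp_thms)
    then show "Q \<in> {Q. minimal_prime_over R (ext_ideal A B f J P) Q}" using Q by simp
  qed
  have "{dim_loc R Q | Q. primeideal Q R \<and> ext_ideal A B f J P \<subseteq> Q}
      = {dim_loc R Q | Q. primeideal Q R \<and> prime_f B f J P \<subseteq> Q}"
  proof -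
    have e: "(primeideal Q R \<and> ext_ideal A B f J P \<subseteq> Q) = (primeideal Q R \<and> prime_f B f J P \<subseteq> Q)" for Q
      by (cases "primeideal Q R") (simp_all add: key)
    show ?thesis by (simp only: e)
  qed
  then show "height R (ext_ideal A B f J P) = height R (prime_f B f J P)"
    unfolding height_def by simp
qed

end

theorem lemma4p4:
  fixes A :: "('a, 'm) ring_scheme" and B :: "('b, 'n) ring_scheme"
    and f :: "'a \<Rightarrow> 'b" and J :: "'b set" and \<a> :: "'a set" and \<p> :: "'a set"
  assumes "cring A" and "cring B" and "f \<in> ring_hom A B"
    and "ideal J B" and "J \<subseteq> nilradical B"
    and "ideal \<a> A" and "primeideal \<p> A"
  shows "(minimal_prime_over A \<a> \<p> \<longleftrightarrow>
            minimal_prime_over (amalg A B f J) (ext_ideal A B f J \<a>) (prime_f B f J \<p>))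
       \<and> height A \<a> = height (amalg A B f J) (ext_ideal A B f J \<a>)
       \<and> {Q. minimal_prime_over (amalg A B f J) (ext_ideal A B f J \<p>) Q} = {prime_f B f J \<p>}
       \<and> height (amalg A B f J) (ext_ideal A B f J \<p>) = height (amalg A B f J) (prime_f B f J \<p>)"
proof -
  interpret amal A B f J
    by (rule amal.intro[OF assms(1,2)], rule amal_axioms.intro[OF assms(3,4,5)])
  show ?thesis using part1[OF assms(6,7)] part2[OF assms(6)] part3[OF assms(7)] by simp
qed

end
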